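(* Let $\delta\in[\frac{\sqrt2}{2},1)$ and $p\in(0,1)$. Define $$h(p)=\begin{cases}1-0.5p, & p\in(0,p^{\star}],\\ 1-0.62p, & p\in(p^{\star},1),\end{cases}\qquad C(p)=\begin{cases}\left(\dfrac{\big((2-\delta)^{1-\frac{2}{p}}+2\delta\big)g(p)}{1-\delta}\right)^{p/2}, & p\in(0,p^{\star}],\\[2ex] \left(\dfrac{(2-\delta)^{1-\frac{2}{p}}g(p)+2^{2-\frac{2}{p}}\delta}{1-\delta}\right)^{p/2}, & p\in(p^{\star},1).\end{cases}$$ If $\delta\le h(p)$, then $C(p)<1$.
   Context: $g(p)=\frac{p}{2}(1-\frac{p}{2})^{\frac{2}{p}-1}$ for $p\in(0,1]$. $p^{\star}\approx0.45418$ is the unique solution in $(0,1]$ of $(\frac{p}{2})^{1/2}(2-p)^{\frac1p-\frac12}=1$. *)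

theory Defs
  imports "HOL-Analysis.Analysis"
begin

definition g :: "real \<Rightarrow> real" where
  "g p = (p / 2) * (1 - p / 2) powr (2 / p - 1)"

definition pstar :: real where
  "pstar = (THE p. 0 < p \<and> p \<le> 1 \<and> (p / 2) powr (1/2) * (2 - p) powr (1 / p - 1/2) = 1)"

definition h :: "real \<Rightarrow> real" where
  "h p = (if p \<le> pstar then 1 - 0.5 * p else 1 - 0.62 * p)"

definition C :: "real \<Rightarrow> real \<Rightarrow> real" where
  "C \<delta> p = (if p \<le> pstar
     then (((2 - \<delta>) powr (1 - 2 / p) + 2 * \<delta>) * g p / (1 - \<delta>)) powr (p / 2)
     else (((2 - \<delta>) powr (1 - 2 / p) * g p + 2 powr (2 - 2 / p) * \<delta>) / (1 - \<delta>)) powr (p / 2))"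

end

theory Submission imports Defs begin
lemma ln_diff: fixes q::real assumes "0 \<le> q" "q < 1" shows "ln (1-q) - ln (1+q) \<le> -2*q"
proof -
  let ?f = "\<lambda>t::real. ln (1+t) - ln (1-t) - 2*t"
  have "?f 0 \<le> ?f q"
  proof (rule DERIV_nonneg_imp_nondecreasing[OF assms(1)])
    fix x assume x: "0 \<le> x" "x \<le> q"
    hence x1: "x < 1" using assms by simp
    have "DERIV ?f x :> (1/(1+x) - (-1)/(1-x) - 2)"
      using x x1 by (auto intro!: derivative_eq_intros)
    moreover have "1/(1+x) - (-1)/(1-x) - 2 \<ge> 0"
    proof -
      have a: "1+x > 0" "1-x > 0" using x x1 by auto
      have "1/(1+x) - (-1)/(1-x) - 2 = 2*x^2/((1+x)*(1-x))" using a
        by (simp add: divide_simps) (simp add: algebra_simps power2_eq_square)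
      also have "\<dots> \<ge> 0" using a by simp
      finally show ?thesis .
    qed
    ultimately show "\<exists>y. DERIV ?f x :> y \<and> y \<ge> 0" by blast
  qed
  thus ?thesis by simp
qed

lemma e_bounds: "exp (-7/5) + 2 * exp (-1) < (1::real)"
proof -
  have e: "exp (1::real) \<ge> 2.718" using e_approx_32 by (simp add: abs_if split: if_splits)
  have "exp (2/5::real) \<ge> 1.48" using exp_lower_Taylor_quadratic[of "2/5::real"] by (simp add: power2_eq_square)
  hence a: "exp (-2/5::real) \<le> 1/1.48" by (simp add: exp_minus field_simps)
  have "exp (-7/5::real) = exp (-1) * exp (-2/5)" by (simp flip: exp_add)
  also have "\<dots> \<le> exp (-1) * (1/1.48)" using a by simp
  finally have "exp (-7/5) + 2 * exp (-1::real) \<le> exp (-1) * (1/1.48 + 2)" by simp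
  also have "\<dots> < 1" using e by (simp add: exp_minus field_simps)
  finally show ?thesis .
qed

lemma e_bound2: "exp (-3/4) < (0.55::real)"
proof -
  have "exp (3/4::real) \<ge> 2.03" using exp_lower_Taylor_quadratic[of "3/4::real"] by (simp add: power2_eq_square)
  thus ?thesis by (simp add: exp_minus field_simps)
qed

lemma ln2_half: "ln (2::real) \<ge> 1/2"
  using ln_le_minus_one[of "1/2::real"] by (simp add: ln_div)
theorem lemma1:
  fixes \<delta> p :: real
  assumes "sqrt 2 / 2 \<le> \<delta>" and "\<delta> < 1"
    and "0 < p" and "p < 1"
    and "\<delta> \<le> h p"
  shows "C \<delta> p < 1"
proof -
  define q where "q = p/2"
  define m where "m = 2/p - 1"
  have q0: "0 < q" "q < 1/2" using assms(3,4) by (auto simp: q_def)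
  have mq: "m = 1/q - 1" "1 - 2/p = -m" "2 - 2/p = 2 - 1/q" using assms(3) by (auto simp: m_def q_def)
  have qm: "q * m = 1 - q" using q0 by (simp add: mq field_simps)
  have m0: "m > 0" using q0 by (simp add: mq field_simps)
  have s2: "sqrt 2 > 1.4" by (rule real_less_rsqrt) (simp add: power2_eq_square)
  have d7: "\<delta> > 7/10" using assms(1) s2 by simp
  have gq: "g p = q * (1-q) powr m" by (simp add: g_def q_def m_def)
  have lnq: "ln (1-q) \<le> -q" using ln_le_minus_one[of "1-q"] q0 by simp
  have ka: "(1-q) powr m \<le> exp (q - 1)"
  proof -
    have "(1-q) powr m = exp (m * ln (1-q))" using q0 by (simp add: powr_def)
    also have "m * ln (1-q) \<le> m * (-q)" using lnq m0 by (intro mult_left_mono) auto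
    hence "exp (m * ln (1-q)) \<le> exp (q - 1)" using qm by (simp add: algebra_simps)
    finally show ?thesis .
  qed
  have dp: "1 - \<delta> > 0" using assms(2) by simp
  show ?thesis
  proof (cases "p \<le> pstar")
    case True
    have dq: "\<delta> \<le> 1 - q" using assms(5) True by (simp add: h_def q_def)
    have q3: "q \<le> 3/10" using dq d7 by simp
    have b: "(2-\<delta>) powr (-m) \<le> (1+q) powr (-m)"
      using dq m0 q0 by (intro powr_mono2') auto
    have ab: "(1+q) powr (-m) * (1-q) powr m \<le> exp (-7/5)"
    proof -
      have "(1+q) powr (-m) * (1-q) powr m = exp (m * (ln (1-q) - ln (1+q)))"
        using q0 by (simp add: powr_def algebra_simps flip: exp_add)
      also have "\<dots> \<le> exp (m * (-2*q))"
        using ln_diff[of q] q0 m0 by (intro exp_mono mult_left_mono) auto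
      also have "\<dots> \<le> exp (-7/5)" using qm q3 by (simp add: algebra_simps)
      finally show ?thesis .
    qed
    have c: "\<delta> * (1-q) powr m \<le> exp (-1)"
    proof -
      have "\<delta> * (1-q) powr m \<le> (1-q) * (1-q) powr m"
        using dq q0 by (intro mult_right_mono) auto
      also have "(1-q) * (1-q) powr m = (1-q) powr (1 + m)"
        using q0 by (simp add: powr_add)
      also have "\<dots> = exp ((1/q) * ln (1-q))"
        using q0 by (simp add: powr_def mq)
      also have "(1/q) * ln (1-q) \<le> (1/q) * (-q)" using lnq q0 by (intro mult_left_mono) auto
      hence "exp ((1/q) * ln (1-q)) \<le> exp (-1)" using q0 by simp
      finally show ?thesis .
    qed
    have X: "((2 - \<delta>) powr (1 - 2 / p) + 2 * \<delta>) * g p < 1 - \<delta>"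
    proof -
      have pm: "(1-q) powr m \<ge> 0" by simp
      have "((2 - \<delta>) powr (1 - 2 / p) + 2 * \<delta>) * g p
          = q * ((2-\<delta>) powr (-m) * (1-q) powr m + 2 * (\<delta> * (1-q) powr m))"
        by (simp add: gq mq algebra_simps)
      also have "\<dots> \<le> q * ((1+q) powr (-m) * (1-q) powr m + 2 * exp (-1))"
        using b c pm q0 by (intro mult_left_mono add_mono mult_right_mono) auto
      also have "\<dots> \<le> q * (exp (-7/5) + 2 * exp (-1))"
        using ab q0 by (intro mult_left_mono) auto
      also have "\<dots> < q * 1" using e_bounds q0 by (intro mult_strict_left_mono) auto
      also have "\<dots> \<le> 1 - \<delta>" using dq by simp
      finally show ?thesis .
    qed
    have X0: "0 \<le> ((2 - \<delta>) powr (1 - 2 / p) + 2 * \<delta>) * g p / (1 - \<delta>)"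
      using dp d7 q0 by (simp add: gq)
    have "((2 - \<delta>) powr (1 - 2 / p) + 2 * \<delta>) * g p / (1 - \<delta>) < 1"
      using X dp by simp
    hence "(((2 - \<delta>) powr (1 - 2 / p) + 2 * \<delta>) * g p / (1 - \<delta>)) powr (p/2) < 1 powr (p/2)"
      using X0 assms(3) by (intro powr_less_mono2) auto
    thus ?thesis using True by (simp add: C_def)
  next
    case False
    have dq: "\<delta> \<le> 1 - 1.24 * q" using assms(5) False by (simp add: h_def q_def)
    have q4: "q < 1/4" using dq d7 by simp
    have T1: "(2 - \<delta>) powr (1 - 2 / p) * g p \<le> q * exp (-3/4)"
    proof -
      have "(2-\<delta>) powr (-m) \<le> 1 powr (-m)"
        using dq m0 q0 assms(2) by (intro powr_mono2') auto
      hence b: "(2-\<delta>) powr (-m) \<le> 1" by simp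
      have "(1-q) powr m \<le> exp (-3/4)" using ka q4 exp_le_cancel_iff[of "q - 1" "-3/4"] by linarith
      hence "(2-\<delta>) powr (-m) * (1-q) powr m \<le> 1 * exp (-3/4)"
        using b by (intro mult_mono) auto
      hence "q * ((2-\<delta>) powr (-m) * (1-q) powr m) \<le> q * exp (-3/4)"
        using q0 by (intro mult_left_mono) auto
      moreover have "(2 - \<delta>) powr (1 - 2 / p) * g p = q * ((2-\<delta>) powr (-m) * (1-q) powr m)"
        by (simp only: gq mq) (simp add: ac_simps)
      ultimately show ?thesis by simp
    qed
    define x where "x = 1/q"
    have xq: "q * x = 1" using q0 by (simp add: x_def)
    have x4: "x > 4" using q4 q0 by (simp add: x_def field_simps)
    have ln2: "ln (2::real) \<ge> 1/2" by (rule ln2_half)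
    have p2: "2 powr (x - 4) \<ge> 1 + (x-4) * ln 2"
      using exp_ge_add_one_self[of "(x-4) * ln 2"] by (simp add: powr_def)
    have pos: "1 + (x-4) * ln 2 > 0" proof -
      have "(x-4) * ln 2 \<ge> 0" using x4 ln2 by simp
      thus ?thesis by linarith
    qed
    have p3: "(2::real) powr (2 - x) = (1/4) / 2 powr (x - 4)"
    proof -
      have "(2::real) powr (2 - x) * 2 powr (x - 4) = 2 powr (-2)" by (simp flip: powr_add)
      also have "\<dots> = 1/4" by (simp add: powr_minus)
      finally show ?thesis by (simp add: field_simps)
    qed
    have T2: "2 powr (2 - 2 / p) * \<delta> \<le> q * 0.69"
    proof -
      have A: "2 powr (2 - 2 / p) * \<delta> = (1/4) * (\<delta> / 2 powr (x - 4))"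
      proof -
        have e: "2 - 2/p = 2 - x" by (simp add: mq x_def)
        show ?thesis by (simp only: e p3) simp
      qed
      have B: "\<delta> / 2 powr (x - 4) \<le> \<delta> / (1 + (x-4) * ln 2)"
        using p2 pos d7 by (intro divide_left_mono) auto
      have Cc: "\<delta> / (1 + (x-4) * ln 2) \<le> 2.76 * q"
      proof -
        have "2.76 * q * (1 + (x-4) * ln 2) = 2.76 * q + 2.76 * ln 2 * (1 - 4*q)"
        proof -
          have "2.76 * q * (1 + (x-4) * ln 2) = 2.76 * q + 2.76 * ln 2 * (q * x) - 4 * 2.76 * q * ln 2"
            by (simp add: algebra_simps)
          moreover have "2.76 * ln 2 * (q * x) = 2.76 * ln (2::real)" using xq by simp
          moreover have "2.76 * ln 2 * (1 - 4*q) = 2.76 * ln 2 - 4 * 2.76 * q * ln (2::real)"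
            by (simp add: field_simps)
          ultimately show ?thesis by linarith
        qed
        also have "\<dots> \<ge> 2.76 * q + 1 * (1 - 4*q)"
          using ln2 q4 by (intro add_left_mono mult_right_mono) auto
        finally have "\<delta> \<le> 2.76 * q * (1 + (x-4) * ln 2)" using dq by (simp add: power2_eq_square)
        thus ?thesis using pos by (simp add: divide_le_eq)
      qed
      have D: "\<delta> / 2 powr (x - 4) \<le> 2.76 * q" using B Cc by (rule order_trans)
      show ?thesis unfolding A using D by (simp add: power2_eq_square mult.commute)
    qed
    have X: "(2 - \<delta>) powr (1 - 2 / p) * g p + 2 powr (2 - 2 / p) * \<delta> < 1 - \<delta>"
    proof -
      have "q * (exp (-3/4) + 0.69) < q * 1.24"
        using e_bound2 q0 by (intro mult_strict_left_mono) auto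
      hence "q * exp (-3/4) + q * 0.69 < q * 1.24" by (simp only: distrib_left)
      moreover have n: "(1.24::real) = 31/25" "(0.69::real) = 69/100" by simp_all
      ultimately show ?thesis using T1 T2 dq unfolding n by linarith
    qed
    have X0: "0 \<le> ((2 - \<delta>) powr (1 - 2 / p) * g p + 2 powr (2 - 2 / p) * \<delta>) / (1 - \<delta>)"
      using dp d7 q0 by (simp add: gq)
    have "((2 - \<delta>) powr (1 - 2 / p) * g p + 2 powr (2 - 2 / p) * \<delta>) / (1 - \<delta>) < 1"
      using X dp by simp
    hence "(((2 - \<delta>) powr (1 - 2 / p) * g p + 2 powr (2 - 2 / p) * \<delta>) / (1 - \<delta>)) powr (p/2) < 1 powr (p/2)"
      using X0 assms(3) by (intro powr_less_mono2) auto
    thus ?thesis using False by (simp add: C_def)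
  qed
qed

end
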